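(* Let $G$ be a group, $A$ a semilattice of groups, and $\Theta=(\theta,w)$, $\Theta'=(\theta',w')$ twisted partial actions of $G$ on $A$. If $\Theta$ is equivalent to $\Theta'$, then the corresponding twisted $E(A)*_\theta G$-module structures $\Lambda=\Lambda^\Theta$ and $\Lambda'=\Lambda^{\Theta'}$ on $A$ are equivalent.
   Context: A semilattice of groups is an inverse semigroup $A$ with central idempotents; $A_e=\{a: aa^{-1}=a^{-1}a=e\}$. Multipliers of a semigroup $T$: pairs $(L,R)$ of maps $T\to T$ with $L(st)=L(s)t$, $R(st)=sR(t)$, $sL(t)=R(s)t$, written $ws=L(s)$, $sw=R(s)$; monoid $\mathcal M(T)$, unit group $\mathcal U(\mathcal M(T))$. A twisted partial action of $G$ on $A$ is $(\theta,w)$ with isomorphisms $\theta_x:D_{x^{-1}}\to D_x$ of nonempty ideals and $w_{x,y}\in\mathcal U(\mathcal M(D_xD_{xy}))$ such that (i) $D_x^2=D_x$, $D_xD_y=D_yD_x$; (ii) $D_1=A$, $\theta_1=\mathrm{id}$; (iii) $\theta_x(D_{x^{-1}}D_y)=D_xD_{xy}$; (iv) $\theta_x\theta_y(s)=w_{x,y}\theta_{xy}(s)w_{x,y}^{-1}$ on $D_{y^{-1}}D_{y^{-1}x^{-1}}$; (v) $w_{1,x}=w_{x,1}$ = identity of $D_x$; (vi) $\theta_x(sw_{y,z})w_{x,yz}=\theta_x(s)w_{x,y}w_{xy,z}$ on $D_{x^{-1}}D_yD_{yz}$. $(\theta,w)$ and $(\theta',w')$ are equivalent if $D'_x=D_x$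 and there are $\varepsilon_x\in\mathcal U(\mathcal M(D_x))$ with $\theta'_x(s)=\varepsilon_x\theta_x(s)\varepsilon_x^{-1}$ ($s\in D_{x^{-1}}$) and $\theta'_x(s)w'_{x,y}\varepsilon_{xy}=\varepsilon_x\theta_x(s\varepsilon_y)w_{x,y}$ ($s\in D_{x^{-1}}D_y$). The maps $\theta_x$ restrict to a partial action $\theta$ of $G$ on $E(A)$; equivalent twisted partial actions have the same restriction, so $E(A)*_\theta G=E(A)*_{\theta'}G=\{e\delta_x: e\in E(D_x)\}$ with product $e\delta_x\cdot f\delta_y=\theta_x(\theta_x^{-1}(e)f)\delta_{xy}$ (an $E$-unitary inverse semigroup). $\Lambda^\Theta=(\alpha,\lambda,f)$ is given by $\alpha(e\delta_1)=e$, $\lambda_{e\delta_x}(a)=\theta_x(\theta_x^{-1}(e)a)$, $f(e\delta_x,e'\delta_y)=\theta_x(\theta_x^{-1}(e)e')w_{x,y}$ (and similarly for $\Theta'$). Two twisted module structures $(\alpha,\lambda,f)$, $(\alpha',\lambda',f')$ over an inverse semigroup $S$ are equivalent if $\alpha'=\alpha$ and there is $g:S\to A$ with $g(s)\in A_{\alpha(ss^{-1})}$, $\lambda'_s(a)=g(s)\lambda_s(a)g(s)^{-1}$ and $f'(s,t)g(st)=g(s)\lambda_s(g(t))f(s,t)$. *)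

theory Defs
  imports Main
begin

definition inverse_semigroup :: "'a::semigroup_mult itself \<Rightarrow> bool" where
  "inverse_semigroup _ \<longleftrightarrow> (\<forall>a::'a. \<exists>!b. a * b * a = a \<and> b * a * b = b)"

definition ainv :: "'a::semigroup_mult \<Rightarrow> 'a" where
  "ainv a = (THE b. a * b * a = a \<and> b * a * b = b)"

definition idem :: "'a::semigroup_mult \<Rightarrow> bool" where
  "idem e \<longleftrightarrow> e * e = e"

definition semilattice_of_groups :: "'a::semigroup_mult itself \<Rightarrow> bool" where
  "semilattice_of_groups T \<longleftrightarrow> inverse_semigroup T \<and>
     (\<forall>e a::'a. idem e \<longrightarrow> e * a = a * e)"

definition Agrp :: "'a::semigroup_mult \<Rightarrow> 'a set" where
  "Agrp e = {a. a * ainv a = e \<and> ainv a * a = e}"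

definition setmul :: "'a::semigroup_mult set \<Rightarrow> 'a set \<Rightarrow> 'a set" (infixl "\<cdot>" 70) where
  "X \<cdot> Y = {a * b | a b. a \<in> X \<and> b \<in> Y}"

definition is_ideal :: "'a::semigroup_mult set \<Rightarrow> bool" where
  "is_ideal I \<longleftrightarrow> I \<noteq> {} \<and> (\<forall>a s. s \<in> I \<longrightarrow> a * s \<in> I \<and> s * a \<in> I)"

text \<open>A multiplier w of T is a pair (L,R); w s = L s and s w = R s.\<close>
type_synonym 'a mult = "('a \<Rightarrow> 'a) \<times> ('a \<Rightarrow> 'a)"

abbreviation mL :: "'a mult \<Rightarrow> 'a \<Rightarrow> 'a" where "mL \<equiv> fst"
abbreviation mR :: "'a mult \<Rightarrow> 'a \<Rightarrow> 'a" where "mR \<equiv> snd"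

definition is_multiplier :: "'a::semigroup_mult set \<Rightarrow> 'a mult \<Rightarrow> bool" where
  "is_multiplier T m \<longleftrightarrow>
     (\<forall>s\<in>T. mL m s \<in> T \<and> mR m s \<in> T) \<and>
     (\<forall>s\<in>T. \<forall>t\<in>T. mL m (s * t) = mL m s * t \<and> mR m (s * t) = s * mR m t
                    \<and> s * mL m t = mR m s * t)"

text \<open>m' is an inverse of m in the monoid M(T) (product (L,R)(L',R') = (L o L', R' o R)).\<close>
definition mult_inverse_of :: "'a::semigroup_mult set \<Rightarrow> 'a mult \<Rightarrow> 'a mult \<Rightarrow> bool" where
  "mult_inverse_of T m m' \<longleftrightarrow> is_multiplier T m' \<and>
     (\<forall>s\<in>T. mL m (mL m' s) = s \<and> mL m' (mL m s) = s \<and>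
             mR m (mR m' s) = s \<and> mR m' (mR m s) = s)"

definition unit_multiplier :: "'a::semigroup_mult set \<Rightarrow> 'a mult \<Rightarrow> bool" where
  "unit_multiplier T m \<longleftrightarrow> is_multiplier T m \<and> (\<exists>m'. mult_inverse_of T m m')"

definition minv :: "'a::semigroup_mult set \<Rightarrow> 'a mult \<Rightarrow> 'a mult" where
  "minv T m = (SOME m'. mult_inverse_of T m m')"

section \<open>Twisted partial actions (group G written additively: 0 unit, + product, - inverse)\<close>

definition twisted_partial_action ::
  "('g::group_add \<Rightarrow> 'a::semigroup_mult set) \<Rightarrow> ('g \<Rightarrow> 'a \<Rightarrow> 'a) \<Rightarrow> ('g \<Rightarrow> 'g \<Rightarrow> 'a mult) \<Rightarrow> bool" where
  "twisted_partial_action D \<theta> w \<longleftrightarrow>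
     (\<forall>x. is_ideal (D x)) \<and>
     (\<forall>x. bij_betw (\<theta> x) (D (- x)) (D x) \<and>
          (\<forall>s\<in>D (- x). \<forall>t\<in>D (- x). \<theta> x (s * t) = \<theta> x s * \<theta> x t)) \<and>
     (\<forall>x y. unit_multiplier (D x \<cdot> D (x + y)) (w x y)) \<and>
     (\<forall>x. D x \<cdot> D x = D x) \<and> (\<forall>x y. D x \<cdot> D y = D y \<cdot> D x) \<and>
     D 0 = UNIV \<and> (\<forall>s. \<theta> 0 s = s) \<and>
     (\<forall>x y. \<theta> x ` (D (- x) \<cdot> D y) = D x \<cdot> D (x + y)) \<and>
     (\<forall>x y. \<forall>s \<in> D (- y) \<cdot> D (- y + - x).
        \<theta> x (\<theta> y s) = mR (minv (D x \<cdot> D (x + y)) (w x y)) (mL (w x y) (\<theta> (x + y) s))) \<and>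
     (\<forall>x. \<forall>s\<in>D x. mL (w 0 x) s = s \<and> mR (w 0 x) s = s \<and>
                   mL (w x 0) s = s \<and> mR (w x 0) s = s) \<and>
     (\<forall>x y z. \<forall>s \<in> D (- x) \<cdot> D y \<cdot> D (y + z).
        mR (w x (y + z)) (\<theta> x (mR (w y z) s)) = mR (w (x + y) z) (mR (w x y) (\<theta> x s)))"

definition twisted_equivalent ::
  "('g::group_add \<Rightarrow> 'a::semigroup_mult set) \<Rightarrow> ('g \<Rightarrow> 'a \<Rightarrow> 'a) \<Rightarrow> ('g \<Rightarrow> 'g \<Rightarrow> 'a mult) \<Rightarrow>
   ('g \<Rightarrow> 'a set) \<Rightarrow> ('g \<Rightarrow> 'a \<Rightarrow> 'a) \<Rightarrow> ('g \<Rightarrow> 'g \<Rightarrow> 'a mult) \<Rightarrow> bool" where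
  "twisted_equivalent D \<theta> w D' \<theta>' w' \<longleftrightarrow> D' = D \<and>
     (\<exists>\<epsilon>. (\<forall>x. unit_multiplier (D x) (\<epsilon> x)) \<and>
         (\<forall>x. \<forall>s\<in>D (- x). \<theta>' x s = mR (minv (D x) (\<epsilon> x)) (mL (\<epsilon> x) (\<theta> x s))) \<and>
         (\<forall>x y. \<forall>s\<in>D (- x) \<cdot> D y.
            mR (\<epsilon> (x + y)) (mR (w' x y) (\<theta>' x s)) =
            mR (w x y) (mL (\<epsilon> x) (\<theta> x (mR (\<epsilon> y) s)))))"

definition thinv :: "('g::group_add \<Rightarrow> 'a set) \<Rightarrow> ('g \<Rightarrow> 'a \<Rightarrow> 'a) \<Rightarrow> 'g \<Rightarrow> 'a \<Rightarrow> 'a" where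
  "thinv D \<theta> x = inv_into (D (- x)) (\<theta> x)"

text \<open>Element e delta_x is represented as the pair (e, x).\<close>
definition skew :: "('g::group_add \<Rightarrow> 'a::semigroup_mult set) \<Rightarrow> ('a \<times> 'g) set" where
  "skew D = {(e, x). e \<in> D x \<and> idem e}"

definition smul :: "('g::group_add \<Rightarrow> 'a::semigroup_mult set) \<Rightarrow> ('g \<Rightarrow> 'a \<Rightarrow> 'a) \<Rightarrow>
    'a \<times> 'g \<Rightarrow> 'a \<times> 'g \<Rightarrow> 'a \<times> 'g" where
  "smul D \<theta> s t = (\<theta> (snd s) (thinv D \<theta> (snd s) (fst s) * fst t), snd s + snd t)"

definition sinv :: "('g::group_add \<Rightarrow> 'a::semigroup_mult set) \<Rightarrow> ('g \<Rightarrow> 'a \<Rightarrow> 'a) \<Rightarrow>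
    'a \<times> 'g \<Rightarrow> 'a \<times> 'g" where
  "sinv D \<theta> s = (THE t. t \<in> skew D \<and> smul D \<theta> (smul D \<theta> s t) s = s \<and> smul D \<theta> (smul D \<theta> t s) t = t)"

definition Lalpha :: "'a \<times> 'g \<Rightarrow> 'a" where
  "Lalpha s = fst s"

definition Llambda :: "('g::group_add \<Rightarrow> 'a::semigroup_mult set) \<Rightarrow> ('g \<Rightarrow> 'a \<Rightarrow> 'a) \<Rightarrow>
    'a \<times> 'g \<Rightarrow> 'a \<Rightarrow> 'a" where
  "Llambda D \<theta> s a = \<theta> (snd s) (thinv D \<theta> (snd s) (fst s) * a)"

definition Lf :: "('g::group_add \<Rightarrow> 'a::semigroup_mult set) \<Rightarrow> ('g \<Rightarrow> 'a \<Rightarrow> 'a) \<Rightarrow> ('g \<Rightarrow> 'g \<Rightarrow> 'a mult) \<Rightarrow>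
    'a \<times> 'g \<Rightarrow> 'a \<times> 'g \<Rightarrow> 'a" where
  "Lf D \<theta> w s t = mR (w (snd s) (snd t)) (\<theta> (snd s) (thinv D \<theta> (snd s) (fst s) * fst t))"

definition tmod_equivalent ::
  "'s set \<Rightarrow> ('s \<Rightarrow> 's \<Rightarrow> 's) \<Rightarrow> ('s \<Rightarrow> 's) \<Rightarrow>
   ('s \<Rightarrow> 'a::semigroup_mult) \<Rightarrow> ('s \<Rightarrow> 'a \<Rightarrow> 'a) \<Rightarrow> ('s \<Rightarrow> 's \<Rightarrow> 'a) \<Rightarrow>
   ('s \<Rightarrow> 'a) \<Rightarrow> ('s \<Rightarrow> 'a \<Rightarrow> 'a) \<Rightarrow> ('s \<Rightarrow> 's \<Rightarrow> 'a) \<Rightarrow> bool" where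
  "tmod_equivalent S mul sinv' \<alpha> lam f \<alpha>' lam' f' \<longleftrightarrow>
     (\<forall>s\<in>S. \<alpha>' s = \<alpha> s) \<and>
     (\<exists>g. (\<forall>s\<in>S. g s \<in> Agrp (\<alpha> (mul s (sinv' s)))) \<and>
          (\<forall>s\<in>S. \<forall>a. lam' s a = g s * lam s a * ainv (g s)) \<and>
          (\<forall>s\<in>S. \<forall>t\<in>S. f' s t * g (mul s t) = g s * lam s (g t) * f s t))"

end

theory Submission
  imports Defs
begin

lemma setmulI: "a \<in> X \<Longrightarrow> b \<in> Y \<Longrightarrow> a * b \<in> X \<cdot> Y"
  unfolding setmul_def by blast

lemma setmul_sub_right: "is_ideal Y \<Longrightarrow> X \<cdot> Y \<subseteq> Y"
  unfolding setmul_def is_ideal_def by blast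

lemma setmul_sub_left: "is_ideal X \<Longrightarrow> X \<cdot> Y \<subseteq> X"
  unfolding setmul_def is_ideal_def by blast

lemma ainv_eq:
  assumes "inverse_semigroup TYPE('a::semigroup_mult)" "(a::'a) * b * a = a" "b * a * b = b"
  shows "ainv a = b"
proof -
  have "\<exists>!b. a * b * a = a \<and> b * a * b = b" using assms(1) unfolding inverse_semigroup_def by blast
  then show ?thesis unfolding ainv_def using assms(2,3) by (simp add: the1_equality)
qed

lemma mult_idem_LR:
  fixes T :: "'a::semigroup_mult set"
  assumes m: "is_multiplier T m" and e: "e \<in> T" "idem e"
    and C: "\<And>e a::'a::semigroup_mult. idem e \<Longrightarrow> e * a = a * e"
  shows "mR m e = mL m e"
proof -
  have ee: "e * e = e" using e unfolding idem_def by simp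
  have "mL m e = mL m (e * e)" using ee by simp
  also have "\<dots> = mL m e * e" using m e unfolding is_multiplier_def by blast
  finally have L: "mL m e = mL m e * e" .
  have "mR m e = mR m (e * e)" using ee by simp
  also have "\<dots> = e * mR m e" using m e unfolding is_multiplier_def by blast
  finally have R: "mR m e = e * mR m e" .
  have X: "e * mL m e = mR m e * e" using m e unfolding is_multiplier_def by blast
  have "mL m e = e * mL m e" using L C[OF e(2)] by metis
  also have "\<dots> = mR m e * e" by (rule X)
  also have "\<dots> = mR m e" using R C[OF e(2)] by metis
  finally show ?thesis by simp
qed

lemma mult_unit_idem:
  fixes T :: "'a::semigroup_mult set"
  assumes m: "is_multiplier T m" and inv: "mult_inverse_of T m m'" and e: "e \<in> T" "idem e"
    and C: "\<And>e a::'a::semigroup_mult. idem e \<Longrightarrow> e * a = a * e"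
  shows "mL m e * mL m' e = e" "mL m' e * mL m e = e"
    "mR m' (mL m e) = e"
proof -
  have m': "is_multiplier T m'" using inv unfolding mult_inverse_of_def by blast
  have ee: "e * e = e" using e unfolding idem_def by simp
  have L'T: "mL m' e \<in> T" using m' e unfolding is_multiplier_def by blast
  have LT: "mL m e \<in> T" using m e unfolding is_multiplier_def by blast
  have "mL m' e = mL m' (e * e)" using ee by simp
  also have "\<dots> = mL m' e * e" using m' e unfolding is_multiplier_def by blast
  finally have L': "mL m' e = mL m' e * e" .
  have "mL m e = mL m (e * e)" using ee by simp
  also have "\<dots> = mL m e * e" using m e unfolding is_multiplier_def by blast
  finally have L: "mL m e = mL m e * e" .
  have "mL m e * mL m' e = mL m (e * mL m' e)" using m e L'T unfolding is_multiplier_def by metis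
  also have "e * mL m' e = mL m' e" using L' C[OF e(2)] by metis
  finally show 1: "mL m e * mL m' e = e" using inv e unfolding mult_inverse_of_def by simp
  have "mL m' e * mL m e = mL m' (e * mL m e)" using m' e LT unfolding is_multiplier_def by metis
  also have "e * mL m e = mL m e" using L C[OF e(2)] by metis
  finally show "mL m' e * mL m e = e" using inv e unfolding mult_inverse_of_def by simp
  have "mR m' (mL m e) = mR m' (mL m e * e)" using L by simp
  also have "\<dots> = mL m e * mR m' e" using m' e LT unfolding is_multiplier_def by blast
  also have "mR m' e = mL m' e" by (rule mult_idem_LR[OF m' e C])
  finally show "mR m' (mL m e) = e" using 1 by simp
qed

lemma setmul_ideal_left: "is_ideal X \<Longrightarrow> v \<in> X \<cdot> Y \<Longrightarrow> a * v \<in> X \<cdot> Y"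
proof -
  assume X: "is_ideal X" and v: "v \<in> X \<cdot> Y"
  then obtain p q where "v = p * q" "p \<in> X" "q \<in> Y" unfolding setmul_def by blast
  moreover have "a * p \<in> X" using X \<open>p \<in> X\<close> unfolding is_ideal_def by blast
  ultimately have "a * v = (a * p) * q" "a * p \<in> X" "q \<in> Y" by (auto simp: mult.assoc)
  then show ?thesis using setmulI by metis
qed

lemma mult_idem_absorb:
  fixes T :: "'a::semigroup_mult set"
  assumes m: "is_multiplier T m" and e: "e \<in> T" "idem e"
    and C: "\<And>e a::'a::semigroup_mult. idem e \<Longrightarrow> e * a = a * e"
  shows "mL m e * e = mL m e" "e * mL m e = mL m e"
proof -
  have ee: "e * e = e" using e unfolding idem_def by simp
  have "mL m e = mL m (e * e)" using ee by simp
  also have "\<dots> = mL m e * e" using m e unfolding is_multiplier_def by blast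
  finally show 1: "mL m e * e = mL m e" by simp
  then show "e * mL m e = mL m e" using C[OF e(2)] by metis
qed

lemma ainv_unit:
  fixes T :: "'a::semigroup_mult set"
  assumes IS: "inverse_semigroup TYPE('a)"
    and m: "is_multiplier T m" and inv: "mult_inverse_of T m m'" and e: "e \<in> T" "idem e"
    and C: "\<And>e a::'a::semigroup_mult. idem e \<Longrightarrow> e * a = a * e"
  shows "ainv (mL m e) = mL m' e"
proof -
  have m': "is_multiplier T m'" using inv unfolding mult_inverse_of_def by blast
  note u = mult_unit_idem[OF m inv e C]
  note a1 = mult_idem_absorb[OF m e C]
  note a2 = mult_idem_absorb[OF m' e C]
  show ?thesis
  proof (rule ainv_eq[OF IS])
    show "mL m e * mL m' e * mL m e = mL m e" using u(1) a1(2) by simp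
    show "mL m' e * mL m e * mL m' e = mL m' e" using u(2) a2(2) by simp
  qed
qed

lemma unit_inv:
  assumes "unit_multiplier T m"
  shows "is_multiplier T m" "mult_inverse_of T m (minv T m)" "is_multiplier T (minv T m)"
proof -
  show "is_multiplier T m" using assms unfolding unit_multiplier_def by blast
  show 2: "mult_inverse_of T m (minv T m)" using assms unfolding unit_multiplier_def minv_def
    by (metis someI_ex)
  then show "is_multiplier T (minv T m)" unfolding mult_inverse_of_def by blast
qed


context
  fixes D :: "'g::group_add \<Rightarrow> 'a::semigroup_mult set"
    and \<theta> :: "'g \<Rightarrow> 'a \<Rightarrow> 'a"
    and w :: "'g \<Rightarrow> 'g \<Rightarrow> 'a mult"
  assumes tpa: "twisted_partial_action D \<theta> w"
    and C: "\<And>e a::'a. idem e \<Longrightarrow> e * a = a * e"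
begin

lemma tp_ideal: "is_ideal (D x)" using tpa unfolding twisted_partial_action_def by (elim conjE) blast
lemma tp_bij: "bij_betw (\<theta> x) (D (-x)) (D x)" using tpa unfolding twisted_partial_action_def by (elim conjE) blast
lemma tp_hom: "s \<in> D (-x) \<Longrightarrow> t \<in> D (-x) \<Longrightarrow> \<theta> x (s * t) = \<theta> x s * \<theta> x t"
  using tpa unfolding twisted_partial_action_def by (elim conjE) blast
lemma tp_unit: "unit_multiplier (D x \<cdot> D (x + y)) (w x y)"
  using tpa unfolding twisted_partial_action_def by (elim conjE) blast
lemma tp_D0: "D 0 = UNIV" using tpa unfolding twisted_partial_action_def by (elim conjE) blast
lemma tp_th0: "\<theta> 0 s = s" using tpa unfolding twisted_partial_action_def by (elim conjE) blast
lemma tp_img: "\<theta> x ` (D (-x) \<cdot> D y) = D x \<cdot> D (x + y)"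
  using tpa unfolding twisted_partial_action_def by (elim conjE) blast
lemma tp_iv: "s \<in> D (- y) \<cdot> D (- y + - x) \<Longrightarrow>
   \<theta> x (\<theta> y s) = mR (minv (D x \<cdot> D (x + y)) (w x y)) (mL (w x y) (\<theta> (x + y) s))"
  using tpa unfolding twisted_partial_action_def by (elim conjE) blast

lemma idem_mul: "idem (a::'a) \<Longrightarrow> idem b \<Longrightarrow> idem (a * b)"
proof -
  assume a: "idem a" and b: "idem b"
  have "a * b * (a * b) = a * (b * a) * b" by (simp add: mult.assoc)
  also have "b * a = a * b" using C[OF b] by simp
  also have "a * (a * b) * b = (a * a) * (b * b)" by (simp add: mult.assoc)
  finally show ?thesis using a b unfolding idem_def by simp
qed

lemma ideal_mul: "a \<in> D x \<Longrightarrow> b * a \<in> D x" "a \<in> D x \<Longrightarrow> a * b \<in> D x"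
  using tp_ideal unfolding is_ideal_def by blast+

lemma thinv_in: "e \<in> D x \<Longrightarrow> thinv D \<theta> x e \<in> D (-x) \<and> \<theta> x (thinv D \<theta> x e) = e"
proof -
  assume e: "e \<in> D x"
  have im: "\<theta> x ` D (-x) = D x" using bij_betw_imp_surj_on[OF tp_bij] bij_betw_imp_inj_on[OF tp_bij] by simp
  have "e \<in> \<theta> x ` D (-x)" using e im by simp
  then show ?thesis unfolding thinv_def by (simp add: inv_into_into f_inv_into_f)
qed

lemma thinv_eq: "u \<in> D (-x) \<Longrightarrow> thinv D \<theta> x (\<theta> x u) = u"
proof -
  assume "u \<in> D (-x)"
  moreover have "inj_on (\<theta> x) (D (-x))" using bij_betw_imp_surj_on[OF tp_bij] bij_betw_imp_inj_on[OF tp_bij] by simp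
  ultimately show ?thesis unfolding thinv_def by (simp add: inv_into_f_f)
qed

lemma th_in: "u \<in> D (-x) \<Longrightarrow> \<theta> x u \<in> D x"
  using bij_betw_apply[OF tp_bij] by blast

lemma idem_th: "u \<in> D (-x) \<Longrightarrow> idem u \<Longrightarrow> idem (\<theta> x u)"
  unfolding idem_def using tp_hom[of u x u] by simp

lemma idem_thinv: assumes "e \<in> D x" "idem e" shows "idem (thinv D \<theta> x e)"
proof -
  let ?e = "thinv D \<theta> x e"
  have a: "?e \<in> D (-x)" "\<theta> x ?e = e" using thinv_in assms(1) by auto
  have "\<theta> x (?e * ?e) = \<theta> x ?e * \<theta> x ?e" using a tp_hom by blast
  also have "\<dots> = \<theta> x ?e" using a assms(2) unfolding idem_def by simp
  finally have "\<theta> x (?e * ?e) = \<theta> x ?e" .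
  moreover have "?e * ?e \<in> D (-x)" using a ideal_mul by blast
  moreover have "inj_on (\<theta> x) (D (-x))" using bij_betw_imp_surj_on[OF tp_bij] bij_betw_imp_inj_on[OF tp_bij] by simp
  ultimately show ?thesis unfolding idem_def using a by (simp add: inj_on_def)
qed

lemma th_back: assumes u: "u \<in> D (-x)" "idem u" shows "\<theta> (-x) (\<theta> x u) = u"
proof -
  let ?T = "D (- x) \<cdot> D (- x + x)"
  have uT: "u \<in> ?T"
  proof -
    have "u * u \<in> ?T" using u(1) tp_D0 by (intro setmulI) auto
    then show ?thesis using u(2) unfolding idem_def by simp
  qed
  have "\<theta> (-x) (\<theta> x u) = mR (minv ?T (w (-x) x)) (mL (w (-x) x) (\<theta> (-x + x) u))"
    using tp_iv[of u x "-x"] uT by simp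
  also have "\<dots> = u" using mult_unit_idem(3)[OF unit_inv(1,2)[OF tp_unit] uT u(2) C] tp_th0 by simp
  finally show ?thesis .
qed

lemma thinv0: "thinv D \<theta> 0 k = k"
proof -
  have "k \<in> D (-0)" using tp_D0 by simp
  then show ?thesis using thinv_eq[of k 0] tp_th0 by simp
qed

lemma sinv_skew:
  assumes s: "(e, x) \<in> skew D"
  shows "sinv D \<theta> (e, x) = (thinv D \<theta> x e, -x)"
proof -
  let ?e = "thinv D \<theta> x e"
  have e: "e \<in> D x" "idem e" using s unfolding skew_def by auto
  have a: "?e \<in> D (-x)" "\<theta> x ?e = e" using thinv_in e(1) by auto
  have ie: "idem ?e" using idem_thinv e by blast
  have ee: "e * e = e" "?e * ?e = ?e" using e(2) ie unfolding idem_def by auto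
  have bk: "\<theta> (-x) e = ?e" using th_back[OF a(1) ie] a(2) by simp
  let ?P = "\<lambda>t. t \<in> skew D \<and> smul D \<theta> (smul D \<theta> (e, x) t) (e, x) = (e, x) \<and>
      smul D \<theta> (smul D \<theta> t (e, x)) t = t"
  have P: "?P (?e, -x)"
  proof (intro conjI)
    show "(?e, -x) \<in> skew D" using a ie unfolding skew_def by simp
    have "smul D \<theta> (e, x) (?e, -x) = (e, 0)" unfolding smul_def using ee a by simp
    then show "smul D \<theta> (smul D \<theta> (e, x) (?e, -x)) (e, x) = (e, x)"
      unfolding smul_def using thinv0 ee tp_th0 by simp
    have "thinv D \<theta> (-x) ?e = e" using thinv_eq[of e "-x"] e bk by simp
    then have "smul D \<theta> (?e, -x) (e, x) = (?e, 0)" unfolding smul_def using bk ee by simp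
    then show "smul D \<theta> (smul D \<theta> (?e, -x) (e, x)) (?e, -x) = (?e, -x)"
      unfolding smul_def using thinv0 ee tp_th0 by simp
  qed
  have U: "t = (?e, -x)" if Pt: "?P t" for t
  proof -
    obtain f y where t: "t = (f, y)" by (cases t)
    have f: "f \<in> D y" "idem f" using Pt t unfolding skew_def by auto
    have "x + y + x = x" using Pt t unfolding smul_def by simp
    then have "x + y + x = 0 + x" by simp
    then have "x + y = 0" by (simp only: add_right_cancel)
    then have y: "y = -x" using minus_unique by metis
    have fD: "f \<in> D (-x)" using f y by simp
    let ?k = "\<theta> x (?e * f)"
    have st: "smul D \<theta> (e, x) t = (?k, 0)" unfolding smul_def t y by simp
    have "smul D \<theta> (?k, 0) (e, x) = (?k * e, x)" unfolding smul_def using thinv0 tp_th0 by simp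
    then have ke: "?k * e = e" using Pt st by simp
    have k: "?k = e * \<theta> x f" using tp_hom a fD by simp
    have "e * \<theta> x f * e = e * \<theta> x f"
    proof -
      have "e * \<theta> x f * e = e * (\<theta> x f * e)" by (simp add: mult.assoc)
      also have "\<theta> x f * e = e * \<theta> x f" using C[OF e(2), of "\<theta> x f"] by simp
      also have "e * (e * \<theta> x f) = e * \<theta> x f" using ee by (simp add: mult.assoc[symmetric])
      finally show ?thesis .
    qed
    then have "\<theta> x (?e * f) = \<theta> x ?e" using ke k a by simp
    moreover have "?e * f \<in> D (-x)" using fD ideal_mul by blast
    moreover have "inj_on (\<theta> x) (D (-x))" using bij_betw_imp_surj_on[OF tp_bij] bij_betw_imp_inj_on[OF tp_bij] by simp
    ultimately have ef: "?e * f = ?e" using a by (simp add: inj_on_def)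
    let ?f = "thinv D \<theta> (-x) f"
    have fa: "?f \<in> D (- (- x))" "\<theta> (-x) ?f = f" using thinv_in[of f "-x"] fD by auto
    have fa': "?f \<in> D x" using fa by simp
    let ?m = "\<theta> (-x) (?f * e)"
    have ts: "smul D \<theta> t (e, x) = (?m, 0)" unfolding smul_def t y by simp
    have "smul D \<theta> (?m, 0) t = (?m * f, -x)" unfolding smul_def t y using thinv0 tp_th0 by simp
    then have mf: "?m * f = f" using Pt ts t y by simp
    have "?m = f * ?e" using tp_hom[of ?f "-x" e] fa fa' e(1) bk by simp
    then have "f = f * ?e * f" using mf by simp
    also have "\<dots> = ?e * f * f" using C[OF ie, of f] by simp
    also have "\<dots> = ?e" using ef f(2) unfolding idem_def by (simp add: mult.assoc)
    finally show ?thesis using t y by simp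
  qed
  show ?thesis unfolding sinv_def using P U by (rule the_equality)
qed

end

theorem proposition8p2:
  fixes D D' :: "'g::group_add \<Rightarrow> 'a::semigroup_mult set"
    and \<theta> \<theta>' :: "'g \<Rightarrow> 'a \<Rightarrow> 'a"
    and w w' :: "'g \<Rightarrow> 'g \<Rightarrow> 'a mult"
  assumes "semilattice_of_groups TYPE('a)"
    and "twisted_partial_action D \<theta> w"
    and "twisted_partial_action D' \<theta>' w'"
    and "twisted_equivalent D \<theta> w D' \<theta>' w'"
  shows "tmod_equivalent (skew D) (smul D \<theta>) (sinv D \<theta>)
           Lalpha (Llambda D \<theta>) (Lf D \<theta> w)
           Lalpha (Llambda D' \<theta>') (Lf D' \<theta>' w')"
proof -
  have IS: "inverse_semigroup TYPE('a)" using assms(1) unfolding semilattice_of_groups_def by blast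
  have C: "\<And>e a::'a. idem e \<Longrightarrow> e * a = a * e" using assms(1) unfolding semilattice_of_groups_def by blast
  have DD: "D' = D" using assms(4) unfolding twisted_equivalent_def by blast
  obtain \<epsilon> where U: "\<And>x. unit_multiplier (D x) (\<epsilon> x)"
    and TH: "\<And>x s. s \<in> D (- x) \<Longrightarrow> \<theta>' x s = mR (minv (D x) (\<epsilon> x)) (mL (\<epsilon> x) (\<theta> x s))"
    and W: "\<And>x y s. s \<in> D (- x) \<cdot> D y \<Longrightarrow>
            mR (\<epsilon> (x + y)) (mR (w' x y) (\<theta>' x s)) =
            mR (w x y) (mL (\<epsilon> x) (\<theta> x (mR (\<epsilon> y) s)))"
    using assms(4) unfolding twisted_equivalent_def by blast
  have tpa: "twisted_partial_action D \<theta> w" by (rule assms(2))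
  have tpa': "twisted_partial_action D \<theta>' w'" using assms(3) DD by simp
  note Um = unit_inv(1)[OF U] and Ui = unit_inv(2)[OF U] and Um' = unit_inv(3)[OF U]
  define g where "g = (\<lambda>p::'a \<times> 'g. mL (\<epsilon> (snd p)) (fst p))"
  have basic: "thinv D \<theta> x e \<in> D (-x) \<and> \<theta> x (thinv D \<theta> x e) = e \<and> idem (thinv D \<theta> x e)
      \<and> thinv D \<theta>' x e = thinv D \<theta> x e"
    if s: "(e, x) \<in> skew D" for e x
  proof -
    have e: "e \<in> D x" "idem e" using s unfolding skew_def by auto
    let ?e = "thinv D \<theta> x e"
    have a: "?e \<in> D (-x)" "\<theta> x ?e = e" using thinv_in[OF tpa C e(1)] by auto
    have ie: "idem ?e" using idem_thinv[OF tpa C e] .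
    have "\<theta>' x ?e = e" using TH[OF a(1)] a(2) mult_unit_idem(3)[OF Um Ui e C] by simp
    then have "thinv D \<theta>' x e = ?e" using thinv_eq[OF tpa' C a(1)] by simp
    then show ?thesis using a ie by simp
  qed
  show ?thesis unfolding tmod_equivalent_def DD
  proof (intro conjI ballI exI[of _ g] allI)
    fix s assume s: "s \<in> skew D"
    obtain e x where sx: "s = (e, x)" by (cases s)
    have e: "e \<in> D x" "idem e" using s sx unfolding skew_def by auto
    let ?e = "thinv D \<theta> x e"
    note b = basic[OF s[unfolded sx]]
    have ee: "?e * ?e = ?e" using b unfolding idem_def by simp
    have gs: "g s = mL (\<epsilon> x) e" unfolding g_def sx by simp
    have ai: "ainv (g s) = mL (minv (D x) (\<epsilon> x)) e" unfolding gs by (rule ainv_unit[OF IS Um Ui e C])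
    show "Lalpha s = Lalpha s" by simp
    have "sinv D \<theta> s = (?e, -x)" unfolding sx by (rule sinv_skew[OF tpa C s[unfolded sx]])
    then have "Lalpha (smul D \<theta> s (sinv D \<theta> s)) = e" unfolding Lalpha_def smul_def sx using ee b by simp
    then show "g s \<in> Agrp (Lalpha (smul D \<theta> s (sinv D \<theta> s)))"
      unfolding Agrp_def using ai[unfolded gs] mult_unit_idem(1,2)[OF Um Ui e C] gs by simp
    fix a
    let ?L = "mL (\<epsilon> x)" and ?R' = "mR (minv (D x) (\<epsilon> x))" and ?L' = "mL (minv (D x) (\<epsilon> x))"
    let ?u = "\<theta> x (?e * a)"
    have ea: "?e * a \<in> D (-x)" using ideal_mul[OF tpa C] b by blast
    have uD: "?u \<in> D x" using th_in[OF tpa C ea] .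
    have "\<theta> x (?e * (?e * a)) = e * ?u" using tp_hom[OF tpa C b[THEN conjunct1] ea] b by simp
    then have eu: "e * ?u = ?u" using ee by (simp add: mult.assoc[symmetric])
    have ue: "?u * e = ?u" using eu C[OF e(2)] by metis
    have LeD: "?L e \<in> D x" using Um e unfolding is_multiplier_def by blast
    have "Llambda D \<theta>' s a = \<theta>' x (?e * a)" unfolding Llambda_def sx using b by simp
    also have "\<dots> = ?R' (?L ?u)" using TH[OF ea] .
    also have "?L ?u = ?L e * ?u" using Um e(1) uD eu unfolding is_multiplier_def by metis
    also have "?R' (?L e * ?u) = ?L e * ?R' ?u" using Um' LeD uD unfolding is_multiplier_def by blast
    also have "?R' ?u = ?u * ?R' e" using Um' uD e(1) ue unfolding is_multiplier_def by metis
    also have "?R' e = ?L' e" by (rule mult_idem_LR[OF Um' e C])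
    finally show "Llambda D \<theta>' s a = g s * Llambda D \<theta> s a * ainv (g s)"
      using ai gs unfolding Llambda_def sx by (simp add: mult.assoc)
  next
    fix s t assume s: "s \<in> skew D" and t: "t \<in> skew D"
    obtain e x where sx: "s = (e, x)" by (cases s)
    obtain f y where ty: "t = (f, y)" by (cases t)
    have e: "e \<in> D x" "idem e" using s sx unfolding skew_def by auto
    have f: "f \<in> D y" "idem f" using t ty unfolding skew_def by auto
    let ?e = "thinv D \<theta> x e"
    note b = basic[OF s[unfolded sx]]
    have ee: "?e * ?e = ?e" using b unfolding idem_def by simp
    let ?T = "D x \<cdot> D (x + y)"
    let ?\<sigma> = "?e * f"
    let ?k = "\<theta> x ?\<sigma>"
    let ?Ly = "mL (\<epsilon> y)" and ?Lx = "mL (\<epsilon> x)" and ?Lxy = "mL (\<epsilon> (x + y))"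
    let ?Rxy = "mR (\<epsilon> (x + y))"
    have \<sigma>: "?\<sigma> \<in> D (-x) \<cdot> D y" using b f(1) by (intro setmulI) auto
    have \<sigma>D: "?\<sigma> \<in> D (-x)" "?\<sigma> \<in> D y" using ideal_mul[OF tpa C] b f(1) by blast+
    have TD: "?T \<subseteq> D (x + y)" by (rule setmul_sub_right[OF tp_ideal[OF tpa C]])
    have kT: "?k \<in> ?T" using tp_img[OF tpa C, of x y] \<sigma> by blast
    have k'T: "\<theta>' x ?\<sigma> \<in> ?T" using tp_img[OF tpa' C, of x y] \<sigma> by blast
    note wm = unit_inv(1)[OF tp_unit[OF tpa C]] and w'm = unit_inv(1)[OF tp_unit[OF tpa' C]]
    have zT: "mR (w' x y) (\<theta>' x ?\<sigma>) \<in> ?T" using w'm k'T unfolding is_multiplier_def by blast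
    have ik: "idem ?k" using idem_th[OF tpa C \<sigma>D(1)] idem_mul[OF tpa C] b f(2) by blast
    have gst: "g (smul D \<theta> s t) = ?Lxy ?k" unfolding g_def smul_def sx ty by simp
    have fst: "Lf D \<theta>' w' s t = mR (w' x y) (\<theta>' x ?\<sigma>)" unfolding Lf_def sx ty using b by simp
    have "Lf D \<theta>' w' s t * g (smul D \<theta> s t) = ?Rxy (mR (w' x y) (\<theta>' x ?\<sigma>)) * ?k"
      unfolding fst gst using Um[of "x + y"] zT kT TD unfolding is_multiplier_def by blast
    also have "?Rxy (mR (w' x y) (\<theta>' x ?\<sigma>)) = mR (w x y) (?Lx (\<theta> x (mR (\<epsilon> y) ?\<sigma>)))"
      by (rule W[OF \<sigma>])
    also have "mR (\<epsilon> y) ?\<sigma> = ?e * ?Ly f"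
    proof -
      have "?\<sigma> = ?\<sigma> * f" using f(2) unfolding idem_def by (simp add: mult.assoc)
      then have "mR (\<epsilon> y) ?\<sigma> = ?\<sigma> * mR (\<epsilon> y) f"
        using Um[of y] \<sigma>D(2) f(1) unfolding is_multiplier_def by metis
      also have "mR (\<epsilon> y) f = ?Ly f" by (rule mult_idem_LR[OF Um f C])
      also have "?\<sigma> * ?Ly f = ?e * (f * ?Ly f)" by (simp add: mult.assoc)
      also have "f * ?Ly f = ?Ly f" by (rule mult_idem_absorb(2)[OF Um f C])
      finally show ?thesis .
    qed
    finally have LHS: "Lf D \<theta>' w' s t * g (smul D \<theta> s t) = mR (w x y) (?Lx (\<theta> x (?e * ?Ly f))) * ?k" .
    let ?v = "\<theta> x (?e * ?Ly f)"
    have LyD: "?Ly f \<in> D y" using Um f unfolding is_multiplier_def by blast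
    have pv: "?e * ?Ly f \<in> D (-x) \<cdot> D y" using b LyD by (intro setmulI) auto
    have pvD: "?e * ?Ly f \<in> D (-x)" using ideal_mul[OF tpa C] b by blast
    have vD: "?v \<in> D x" using th_in[OF tpa C pvD] .
    have vT: "?v \<in> ?T" using tp_img[OF tpa C, of x y] pv by blast
    have "\<theta> x (?e * (?e * ?Ly f)) = e * ?v" using tp_hom[OF tpa C b[THEN conjunct1] pvD] b by simp
    then have ev: "e * ?v = ?v" using ee by (simp add: mult.assoc[symmetric])
    have q: "?Lx ?v = ?Lx e * ?v" using Um e(1) vD ev unfolding is_multiplier_def by metis
    have qT: "?Lx e * ?v \<in> ?T" by (rule setmul_ideal_left[OF tp_ideal[OF tpa C] vT])
    have Rk: "mR (w x y) ?k = mL (w x y) ?k" by (rule mult_idem_LR[OF wm kT ik C])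
    have "g s * Llambda D \<theta> s (g t) * Lf D \<theta> w s t = ?Lx e * ?v * mR (w x y) ?k"
      unfolding g_def Llambda_def Lf_def sx ty by simp
    also have "\<dots> = ?Lx e * ?v * mL (w x y) ?k" using Rk by simp
    also have "\<dots> = mR (w x y) (?Lx e * ?v) * ?k"
      using wm qT kT unfolding is_multiplier_def by (metis mult.assoc)
    finally show "Lf D \<theta>' w' s t * g (smul D \<theta> s t) = g s * Llambda D \<theta> s (g t) * Lf D \<theta> w s t"
      using LHS q by simp
  qed
qed

end
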